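(* Let $\mathbb{X}$ be a reflexive Kadets-Klee real Banach space and $\mathbb{Y}$ any real Banach space (both of dimension greater than $1$). Then the pair $(\mathbb{X},\mathbb{Y})$ has sBPBp for compact operators.
   Context: $S_{\mathbb{X}}$ is the unit sphere. $\mathbb{X}$ is Kadets-Klee if $x_n\to x$ weakly and $\|x_n\|\to\|x\|$ imply $\|x_n-x\|\to0$. The pair $(\mathbb{X},\mathbb{Y})$ has sBPBp for compact operators if for every $\epsilon>0$ and every compact linear operator $T:\mathbb{X}\to\mathbb{Y}$ with $\|T\|=1$ there exists $\eta(\epsilon,T)>0$ such that whenever $x_0\in S_{\mathbb{X}}$ satisfies $\|Tx_0\|>1-\eta(\epsilon,T)$, there exists $x_1\in S_{\mathbb{X}}$ with $\|Tx_1\|=1$ and $\|x_1-x_0\|<\epsilon$. *)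

theory Defs
  imports "HOL-Analysis.Analysis"
begin

definition weakly_tendsto :: "(nat \<Rightarrow> 'a::real_normed_vector) \<Rightarrow> 'a \<Rightarrow> bool" where
  "weakly_tendsto xs x \<longleftrightarrow> (\<forall>f :: 'a \<Rightarrow>\<^sub>L real. (\<lambda>n. blinfun_apply f (xs n)) \<longlonglongrightarrow> blinfun_apply f x)"

definition reflexive_space :: "'a::real_normed_vector itself \<Rightarrow> bool" where
  "reflexive_space _ \<longleftrightarrow>
     (\<forall>\<phi> :: ('a \<Rightarrow>\<^sub>L real) \<Rightarrow>\<^sub>L real. \<exists>x::'a. \<forall>f :: 'a \<Rightarrow>\<^sub>L real. blinfun_apply \<phi> f = blinfun_apply f x)"

definition kadets_klee :: "'a::real_normed_vector itself \<Rightarrow> bool" where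
  "kadets_klee _ \<longleftrightarrow>
     (\<forall>(xs :: nat \<Rightarrow> 'a) x. weakly_tendsto xs x \<and> (\<lambda>n. norm (xs n)) \<longlonglongrightarrow> norm x
        \<longrightarrow> (\<lambda>n. norm (xs n - x)) \<longlonglongrightarrow> 0)"

definition dim_gt_one :: "'a::real_vector itself \<Rightarrow> bool" where
  "dim_gt_one _ \<longleftrightarrow> (\<exists>u v :: 'a. u \<noteq> v \<and> independent {u, v})"

definition compact_operator :: "('a::real_normed_vector \<Rightarrow>\<^sub>L 'b::real_normed_vector) \<Rightarrow> bool" where
  "compact_operator T \<longleftrightarrow> compact (closure (blinfun_apply T ` cball 0 1))"

definition sBPBp_compact :: "'a::real_normed_vector itself \<Rightarrow> 'b::real_normed_vector itself \<Rightarrow> bool" where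
  "sBPBp_compact _ _ \<longleftrightarrow>
     (\<forall>\<epsilon>>0. \<forall>T :: 'a \<Rightarrow>\<^sub>L 'b. compact_operator T \<and> norm T = 1 \<longrightarrow>
        (\<exists>\<eta>>0. \<forall>x0. norm x0 = 1 \<and> norm (blinfun_apply T x0) > 1 - \<eta> \<longrightarrow>
           (\<exists>x1. norm x1 = 1 \<and> norm (blinfun_apply T x1) = 1 \<and> norm (x1 - x0) < \<epsilon>)))"

end

theory Submission
  imports Defs
begin

lemma hb_graph:
  fixes G0 :: "('a::real_normed_vector \<times> real) set"
  assumes G0: "subspace G0" and dom0: "\<forall>p\<in>G0. \<bar>snd p\<bar> \<le> norm (fst p)"
  shows "\<exists>f::'a \<Rightarrow>\<^sub>L real. norm f \<le> 1 \<and> (\<forall>p\<in>G0. blinfun_apply f (fst p) = snd p)"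
proof -
  define A where "A = {G. subspace G \<and> G0 \<subseteq> G \<and> (\<forall>p\<in>G. \<bar>snd p\<bar> \<le> norm (fst p))}"
  have "\<exists>M\<in>A. \<forall>X\<in>A. M \<subseteq> X \<longrightarrow> X = M"
  proof (rule Zorn_Lemma2, intro ballI)
    fix C assume C: "C \<in> chains A"
    show "\<exists>U\<in>A. \<forall>X\<in>C. X \<subseteq> U"
    proof (cases "C = {}")
      case True then show ?thesis using G0 dom0 unfolding A_def by auto
    next
      case False
      have CA: "C \<subseteq> A" and ch: "\<And>X Y. X \<in> C \<Longrightarrow> Y \<in> C \<Longrightarrow> X \<subseteq> Y \<or> Y \<subseteq> X"
        using C unfolding chains_def chain_subset_def by auto
      have "\<Union>C \<in> A"
        unfolding A_def
      proof (intro CollectI conjI)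
        show "subspace (\<Union>C)"
          unfolding subspace_def
        proof (intro conjI ballI allI)
          obtain X where "X \<in> C" using False by auto
          then show "0 \<in> \<Union>C" using CA unfolding A_def subspace_def by auto
        next
          fix x y assume "x \<in> \<Union>C" "y \<in> \<Union>C"
          then obtain X Y where XY: "X \<in> C" "Y \<in> C" "x \<in> X" "y \<in> Y" by auto
          show "x + y \<in> \<Union>C"
          proof (cases "X \<subseteq> Y")
            case True
            then have "subspace Y" using XY CA unfolding A_def by auto
            then show ?thesis using XY True by (meson UnionI subsetD subspace_add)
          next
            case False
            then have "Y \<subseteq> X" using ch XY by blast
            moreover have "subspace X" using XY CA unfolding A_def by auto
            ultimately show ?thesis using XY by (meson UnionI subsetD subspace_add)
          qed
        next
          fix c x assume "x \<in> \<Union>C"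
          then obtain X where "X \<in> C" "x \<in> X" by auto
          moreover have "subspace X" using \<open>X \<in> C\<close> CA unfolding A_def by auto
          ultimately show "c *\<^sub>R x \<in> \<Union>C" by (meson UnionI subspace_scale)
        qed
        show "G0 \<subseteq> \<Union>C" using False CA unfolding A_def by auto
        show "\<forall>p\<in>\<Union>C. \<bar>snd p\<bar> \<le> norm (fst p)" using CA unfolding A_def by auto
      qed
      then show ?thesis by auto
    qed
  qed
  then obtain M where MA: "M \<in> A" and Mmax: "\<And>X. X \<in> A \<Longrightarrow> M \<subseteq> X \<Longrightarrow> X = M" by blast
  have Msub: "subspace M" and G0M: "G0 \<subseteq> M" and Mdom: "\<And>p. p \<in> M \<Longrightarrow> \<bar>snd p\<bar> \<le> norm (fst p)"
    using MA unfolding A_def by auto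
  have Mtot: "\<exists>a. (z, a) \<in> M" for z
  proof (rule ccontr)
    assume nz: "\<not> (\<exists>a. (z, a) \<in> M)"
    define S1 where "S1 = (\<lambda>p. snd p - norm (fst p - z)) ` M"
    define c where "c = Sup S1"
    have key: "snd p - norm (fst p - z) \<le> norm (fst q + z) - snd q" if "p \<in> M" "q \<in> M" for p q
    proof -
      have "p + q \<in> M" using Msub that by (simp add: subspace_add)
      then have "snd p + snd q \<le> norm (fst p + fst q)" using Mdom[of "p+q"] by auto
      also have "\<dots> \<le> norm (fst p - z) + norm (fst q + z)"
        using norm_triangle_ineq[of "fst p - z" "fst q + z"] by simp
      finally show ?thesis by simp
    qed
    have ne: "S1 \<noteq> {}" using subspace_0[OF Msub] unfolding S1_def by blast
    have c_ge: "snd p - norm (fst p - z) \<le> c" if "p \<in> M" for p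
      unfolding c_def
    proof (rule cSup_upper)
      show "snd p - norm (fst p - z) \<in> S1" using that unfolding S1_def by auto
      have "0 \<in> M" using Msub by (simp add: subspace_0)
      then show "bdd_above S1" unfolding S1_def bdd_above_def
        using key by (metis (no_types, lifting) imageE)
    qed
    have c_le: "c \<le> norm (fst q + z) - snd q" if "q \<in> M" for q
      unfolding c_def by (rule cSup_least[OF ne]) (use key that in \<open>auto simp: S1_def\<close>)
    have one: "snd p + t * c \<le> norm (fst p + t *\<^sub>R z)" if "p \<in> M" for p t
    proof -
      consider "t = 0" | "t > 0" | "t < 0" by linarith
      then show ?thesis
      proof cases
        case 1 then show ?thesis using Mdom[OF that] by simp
      next
        case 2
        have q: "(1/t) *\<^sub>R p \<in> M" using Msub that by (simp add: subspace_scale)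
        have "c \<le> norm ((1/t) *\<^sub>R fst p + z) - (1/t) * snd p" using c_le[OF q] by simp
        then have "t * c \<le> t * (norm ((1/t) *\<^sub>R fst p + z) - (1/t) * snd p)"
          using 2 by (intro mult_left_mono) auto
        also have "\<dots> = t * norm ((1/t) *\<^sub>R fst p + z) - snd p"
          using 2 by (simp add: field_simps)
        also have "t * norm ((1/t) *\<^sub>R fst p + z) = norm (t *\<^sub>R ((1/t) *\<^sub>R fst p + z))"
          using 2 by simp
        also have "t *\<^sub>R ((1/t) *\<^sub>R fst p + z) = fst p + t *\<^sub>R z"
          using 2 by (simp add: algebra_simps)
        finally show ?thesis by simp
      next
        case 3
        define u where "u = -t"
        have u: "u > 0" using 3 u_def by simp
        have q: "(1/u) *\<^sub>R p \<in> M" using Msub that by (simp add: subspace_scale)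
        have "(1/u) * snd p - norm ((1/u) *\<^sub>R fst p - z) \<le> c" using c_ge[OF q] by simp
        then have "u * ((1/u) * snd p - norm ((1/u) *\<^sub>R fst p - z)) \<le> u * c"
          using u by (intro mult_left_mono) auto
        moreover have "u * ((1/u) * snd p - norm ((1/u) *\<^sub>R fst p - z)) = snd p - u * norm ((1/u) *\<^sub>R fst p - z)"
          using u by (simp add: field_simps)
        ultimately have "snd p - u * norm ((1/u) *\<^sub>R fst p - z) \<le> u * c" by simp
        also have "u * norm ((1/u) *\<^sub>R fst p - z) = norm (u *\<^sub>R ((1/u) *\<^sub>R fst p - z))"
          using u by simp
        also have "u *\<^sub>R ((1/u) *\<^sub>R fst p - z) = fst p + t *\<^sub>R z"
          using u by (simp add: algebra_simps u_def)
        finally show ?thesis using u_def by simp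
      qed
    qed
    define M' where "M' = {(fst p + t *\<^sub>R z, snd p + t * c) | p t. p \<in> M}"
    have MM': "M \<subseteq> M'"
    proof
      fix p assume "p \<in> M"
      moreover have "p = (fst p + (0::real) *\<^sub>R z, snd p + 0 * c)" by simp
      ultimately show "p \<in> M'" unfolding M'_def by blast
    qed
    have "M' \<in> A"
      unfolding A_def
    proof (intro CollectI conjI)
      show "subspace M'"
        unfolding subspace_def
      proof (intro conjI ballI allI)
        show "0 \<in> M'" unfolding M'_def using subspace_0[OF Msub]
          by (auto simp: zero_prod_def intro!: exI[of _ 0] exI[of _ "0::real"])
      next
        fix x y assume "x \<in> M'" "y \<in> M'"
        then obtain p t q s where "p \<in> M" "q \<in> M" "x = (fst p + t *\<^sub>R z, snd p + t * c)"
          "y = (fst q + s *\<^sub>R z, snd q + s * c)" unfolding M'_def by blast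
        then have "x + y = (fst (p+q) + (t+s) *\<^sub>R z, snd (p+q) + (t+s) * c)"
          by (simp add: algebra_simps scaleR_add_left)
        moreover have "p + q \<in> M" using Msub \<open>p \<in> M\<close> \<open>q \<in> M\<close> by (simp add: subspace_add)
        ultimately show "x + y \<in> M'" unfolding M'_def by blast
      next
        fix k x assume "x \<in> M'"
        then obtain p t where "p \<in> M" "x = (fst p + t *\<^sub>R z, snd p + t * c)" unfolding M'_def by blast
        then have "k *\<^sub>R x = (fst (k *\<^sub>R p) + (k*t) *\<^sub>R z, snd (k *\<^sub>R p) + (k*t) * c)"
          by (simp add: algebra_simps)
        moreover have "k *\<^sub>R p \<in> M" using Msub \<open>p \<in> M\<close> by (simp add: subspace_scale)
        ultimately show "k *\<^sub>R x \<in> M'" unfolding M'_def by blast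
      qed
      show "G0 \<subseteq> M'" using G0M MM' by blast
      show "\<forall>p\<in>M'. \<bar>snd p\<bar> \<le> norm (fst p)"
      proof
        fix x assume "x \<in> M'"
        then obtain p t where p: "p \<in> M" and x: "x = (fst p + t *\<^sub>R z, snd p + t * c)" unfolding M'_def by blast
        have "-p \<in> M" using Msub p by (simp add: subspace_neg)
        from one[OF this, of "-t"] have "- snd p - t * c \<le> norm (- (fst p + t *\<^sub>R z))" by simp
        then show "\<bar>snd x\<bar> \<le> norm (fst x)" using one[OF p, of t] x by (simp only: norm_minus_cancel) auto
      qed
    qed
    moreover note MM'
    ultimately have "M' = M" using Mmax by blast
    moreover have "(z, c) \<in> M'"
    proof -
      have "(z, c) = (fst (0::'a\<times>real) + (1::real) *\<^sub>R z, snd (0::'a\<times>real) + 1 * c)" by simp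
      then show ?thesis unfolding M'_def using subspace_0[OF Msub] by blast
    qed
    ultimately show False using nz by auto
  qed
  have uniq: "a = b" if "(x, a) \<in> M" "(x, b) \<in> M" for x a b
  proof -
    have "(x, a) - (x, b) \<in> M" by (rule subspace_diff[OF Msub that])
    then show ?thesis using Mdom[of "(x,a) - (x,b)"] by simp
  qed
  define g where "g x = (SOME a. (x, a) \<in> M)" for x
  have gM: "(x, g x) \<in> M" for x unfolding g_def using Mtot by (metis someI_ex)
  have blg: "bounded_linear g"
  proof (rule bounded_linear_intro[where K=1])
    fix x y
    have "(x, g x) + (y, g y) \<in> M" by (rule subspace_add[OF Msub gM gM])
    then show "g (x + y) = g x + g y" using uniq[OF gM[of "x+y"]] by simp
  next
    fix r x
    have "r *\<^sub>R (x, g x) \<in> M" by (rule subspace_scale[OF Msub gM])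
    then show "g (r *\<^sub>R x) = r *\<^sub>R g x" using uniq[OF gM[of "r *\<^sub>R x"]] by simp
  next
    fix x show "norm (g x) \<le> norm x * 1" using Mdom[OF gM[of x]] by simp
  qed
  define f where "f = Blinfun g"
  have fa: "blinfun_apply f = g" unfolding f_def using blg by (simp add: bounded_linear_Blinfun_apply)
  have "norm f \<le> 1"
    by (rule norm_blinfun_bound) (use Mdom gM fa in auto)
  moreover have "\<forall>p\<in>G0. blinfun_apply f (fst p) = snd p"
  proof
    fix p assume "p \<in> G0"
    then have "(fst p, snd p) \<in> M" using G0M by auto
    then show "blinfun_apply f (fst p) = snd p" using uniq gM fa by metis
  qed
  ultimately show ?thesis by blast
qed

lemma hb_norming:
  fixes x :: "'a::real_normed_vector"
  shows "\<exists>f::'a \<Rightarrow>\<^sub>L real. norm f \<le> 1 \<and> blinfun_apply f x = norm x"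
proof -
  have "\<exists>f::'a \<Rightarrow>\<^sub>L real. norm f \<le> 1 \<and> (\<forall>p\<in>span {(x, norm x)}. blinfun_apply f (fst p) = snd p)"
  proof (rule hb_graph)
    show "subspace (span {(x, norm x)})" by (rule subspace_span)
    show "\<forall>p\<in>span {(x, norm x)}. \<bar>snd p\<bar> \<le> norm (fst p)"
      by (auto simp: span_singleton abs_mult)
  qed
  then obtain f :: "'a \<Rightarrow>\<^sub>L real" where "norm f \<le> 1" "\<forall>p\<in>span {(x, norm x)}. blinfun_apply f (fst p) = snd p"
    by blast
  moreover have "(x, norm x) \<in> span {(x, norm x)}" by (rule span_base) simp
  ultimately show ?thesis by force
qed

lemma hb_separates:
  fixes v :: "'a::real_normed_vector"
  assumes "\<And>f::'a \<Rightarrow>\<^sub>L real. blinfun_apply f v = 0"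
  shows "v = 0"
  using hb_norming[of v] assms by auto

lemma hb_subspace:
  fixes Z :: "'a::real_normed_vector set"
  assumes cl: "closed Z" and sub: "subspace Z" and z: "z \<notin> Z"
  shows "\<exists>f::'a \<Rightarrow>\<^sub>L real. (\<forall>w\<in>Z. blinfun_apply f w = 0) \<and> blinfun_apply f z \<noteq> 0"
proof -
  have Z0: "0 \<in> Z" using sub by (rule subspace_0)
  define d where "d = infdist z Z"
  have dpos: "d > 0" unfolding d_def using infdist_pos_not_in_closed[OF cl _ z] Z0 by auto
  define G0 where "G0 = {(w + t *\<^sub>R z, t * d) | w t. w \<in> Z}"
  have "\<exists>f::'a \<Rightarrow>\<^sub>L real. norm f \<le> 1 \<and> (\<forall>p\<in>G0. blinfun_apply f (fst p) = snd p)"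
  proof (rule hb_graph)
    show "subspace G0"
      unfolding subspace_def
    proof (intro conjI ballI allI)
      have "(0::'a\<times>real) = (0 + 0 *\<^sub>R z, 0 * d)" by (simp add: zero_prod_def)
      then show "0 \<in> G0" unfolding G0_def using Z0 by blast
    next
      fix x y assume "x \<in> G0" "y \<in> G0"
      then obtain w t v s where wv: "w \<in> Z" "v \<in> Z" "x = (w + t *\<^sub>R z, t * d)" "y = (v + s *\<^sub>R z, s * d)"
        unfolding G0_def by blast
      then have "x + y = ((w + v) + (t + s) *\<^sub>R z, (t + s) * d)" by (simp add: algebra_simps scaleR_add_left)
      moreover have "w + v \<in> Z" using sub wv by (simp add: subspace_add)
      ultimately show "x + y \<in> G0" unfolding G0_def by blast
    next
      fix k x assume "x \<in> G0"
      then obtain w t where wv: "w \<in> Z" "x = (w + t *\<^sub>R z, t * d)" unfolding G0_def by blast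
      then have "k *\<^sub>R x = (k *\<^sub>R w + (k * t) *\<^sub>R z, (k * t) * d)" by (simp add: algebra_simps)
      moreover have "k *\<^sub>R w \<in> Z" using sub wv by (simp add: subspace_scale)
      ultimately show "k *\<^sub>R x \<in> G0" unfolding G0_def by blast
    qed
    show "\<forall>p\<in>G0. \<bar>snd p\<bar> \<le> norm (fst p)"
    proof
      fix p assume "p \<in> G0"
      then obtain w t where wv: "w \<in> Z" "p = (w + t *\<^sub>R z, t * d)" unfolding G0_def by blast
      show "\<bar>snd p\<bar> \<le> norm (fst p)"
      proof (cases "t = 0")
        case True then show ?thesis using wv by simp
      next
        case False
        have "- (1/t) *\<^sub>R w \<in> Z" using sub wv by (simp add: subspace_scale subspace_neg)
        then have "d \<le> dist z (- (1/t) *\<^sub>R w)" unfolding d_def by (rule infdist_le)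
        also have "dist z (- (1/t) *\<^sub>R w) = norm (z + (1/t) *\<^sub>R w)" by (simp add: dist_norm)
        finally have "\<bar>t\<bar> * d \<le> \<bar>t\<bar> * norm (z + (1/t) *\<^sub>R w)" by (simp add: mult_left_mono)
        also have "\<bar>t\<bar> * norm (z + (1/t) *\<^sub>R w) = norm (t *\<^sub>R (z + (1/t) *\<^sub>R w))" by simp
        also have "t *\<^sub>R (z + (1/t) *\<^sub>R w) = w + t *\<^sub>R z" using False by (simp add: algebra_simps)
        finally show ?thesis using wv dpos by (simp add: abs_mult)
      qed
    qed
  qed
  then obtain f :: "'a \<Rightarrow>\<^sub>L real" where f: "\<forall>p\<in>G0. blinfun_apply f (fst p) = snd p" by blast
  have "\<forall>w\<in>Z. blinfun_apply f w = 0"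
  proof
    fix w assume "w \<in> Z"
    then have "(w + 0 *\<^sub>R z, 0 * d) \<in> G0" unfolding G0_def by blast
    then show "blinfun_apply f w = 0" using f by fastforce
  qed
  moreover have "(0 + 1 *\<^sub>R z, 1 * d) \<in> G0" unfolding G0_def using Z0 by blast
  then have "blinfun_apply f z = d" using f by fastforce
  ultimately show ?thesis using dpos by auto
qed

definition wcl :: "(nat \<Rightarrow> 'a::real_normed_vector) \<Rightarrow> 'a \<Rightarrow> bool" where
  "wcl s x \<longleftrightarrow> (\<forall>F::('a \<Rightarrow>\<^sub>L real) set. \<forall>\<delta>>0. finite F \<longrightarrow>
      (\<exists>\<^sub>F n in sequentially. \<forall>f\<in>F. \<bar>blinfun_apply f (s n) - blinfun_apply f x\<bar> < \<delta>))"

lemma small_zero: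
  fixes a C :: real
  assumes "C \<ge> 0" "\<And>\<delta>. \<delta> > 0 \<Longrightarrow> \<bar>a\<bar> \<le> C * \<delta>"
  shows "a = 0"
proof (rule ccontr)
  assume "a \<noteq> 0"
  then have "\<bar>a\<bar> > 0" by simp
  have "\<bar>a\<bar> \<le> C * (\<bar>a\<bar> / (2 * (C + 1)))" using assms(2)[of "\<bar>a\<bar> / (2 * (C + 1))"] \<open>\<bar>a\<bar> > 0\<close> assms(1) by simp
  also have "\<dots> = \<bar>a\<bar> * (C / (2 * (C + 1)))" by simp
  also have "\<dots> < \<bar>a\<bar> * 1"
    using \<open>\<bar>a\<bar> > 0\<close> assms(1) by (intro mult_strict_left_mono) (auto simp: field_simps)
  finally show False by simp
qed

lemma wcl_exists:
  fixes s :: "nat \<Rightarrow> 'a::real_normed_vector"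
  assumes refl: "reflexive_space TYPE('a)" and bd: "\<And>n. norm (s n) \<le> 1"
  shows "\<exists>x. wcl s x"
proof -
  define K where "K = Pi\<^sub>E UNIV (\<lambda>f::'a \<Rightarrow>\<^sub>L real. cball (0::real) (norm f))"
  have "compactin (product_topology (\<lambda>_. euclidean) UNIV) K"
    unfolding K_def compactin_PiE by auto
  then have cK: "compact K" by (simp add: euclidean_product_topology)
  define \<phi> where "\<phi> n = (\<lambda>f::'a \<Rightarrow>\<^sub>L real. blinfun_apply f (s n))" for n
  have \<phi>K: "\<phi> n \<in> K" for n
  proof -
    have "\<bar>blinfun_apply f (s n)\<bar> \<le> norm f" for f :: "'a \<Rightarrow>\<^sub>L real"
    proof -
      have "\<bar>blinfun_apply f (s n)\<bar> \<le> norm f * norm (s n)" using norm_blinfun[of f "s n"] by simp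
      also have "\<dots> \<le> norm f * 1" using bd by (intro mult_left_mono) auto
      finally show ?thesis by simp
    qed
    then show ?thesis unfolding K_def \<phi>_def PiE_UNIV_domain by (auto simp: dist_real_def)
  qed
  let ?F = "filtermap \<phi> sequentially"
  have "?F \<noteq> bot" by (simp add: filtermap_bot_iff)
  moreover have "eventually (\<lambda>x. x \<in> K) ?F" by (simp add: eventually_filtermap \<phi>K)
  ultimately obtain p where pK: "p \<in> K" and pne: "inf (nhds p) ?F \<noteq> bot"
    using cK unfolding compact_filter by blast
  have freq: "\<exists>\<^sub>F n in sequentially. \<forall>f\<in>F. \<bar>blinfun_apply f (s n) - p f\<bar> < \<delta>"
    if "finite F" "\<delta> > 0" for F :: "('a \<Rightarrow>\<^sub>L real) set" and \<delta>
  proof (rule ccontr)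
    assume nf: "\<not> ?thesis"
    define U where "U = {\<psi>. \<forall>f\<in>F. \<psi> (id f) \<in> ball (p f) \<delta>}"
    have "open U" unfolding U_def by (rule product_topology_basis') (use that in auto)
    moreover have "p \<in> U" unfolding U_def using that by auto
    ultimately have "eventually (\<lambda>\<psi>. \<psi> \<in> U) (nhds p)" by (rule eventually_nhds_in_open)
    moreover have "eventually (\<lambda>\<psi>. \<psi> \<notin> U) ?F"
      using nf unfolding eventually_filtermap not_frequently U_def \<phi>_def
      by (auto simp: dist_real_def abs_minus_commute)
    ultimately have "eventually (\<lambda>_. False) (inf (nhds p) ?F)"
      unfolding eventually_inf by blast
    then show False using pne by (simp add: eventually_False)
  qed
  have pb: "\<bar>p f\<bar> \<le> norm f" for f using pK unfolding K_def PiE_UNIV_domain by (auto simp: dist_real_def)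
  have padd: "p (f + g) = p f + p g" for f g
  proof -
    have "\<bar>p (f + g) - p f - p g\<bar> \<le> 3 * \<delta>" if dpos: "\<delta> > 0" for \<delta>
    proof -
      obtain n where n: "\<forall>h\<in>{f, g, f + g}. \<bar>blinfun_apply h (s n) - p h\<bar> < \<delta>"
        using frequently_ex[OF freq[of "{f, g, f+g}" \<delta>]] dpos by auto
      then show ?thesis by (auto simp: blinfun.add_left)
    qed
    then have "p (f + g) - p f - p g = 0" by (intro small_zero[of 3]) auto
    then show ?thesis by simp
  qed
  have pscale: "p (c *\<^sub>R f) = c *\<^sub>R p f" for c f
  proof -
    have "\<bar>p (c *\<^sub>R f) - c * p f\<bar> \<le> (1 + \<bar>c\<bar>) * \<delta>" if dpos: "\<delta> > 0" for \<delta>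
    proof -
      obtain n where n: "\<forall>h\<in>{f, c *\<^sub>R f}. \<bar>blinfun_apply h (s n) - p h\<bar> < \<delta>"
        using frequently_ex[OF freq[of "{f, c *\<^sub>R f}" \<delta>]] dpos by auto
      then have a: "\<bar>c * blinfun_apply f (s n) - p (c *\<^sub>R f)\<bar> < \<delta>"
        and b: "\<bar>blinfun_apply f (s n) - p f\<bar> < \<delta>" by (auto simp: blinfun.scaleR_left)
      have "\<bar>c * blinfun_apply f (s n) - c * p f\<bar> = \<bar>c\<bar> * \<bar>blinfun_apply f (s n) - p f\<bar>"
        by (simp add: abs_mult[symmetric] right_diff_distrib)
      also have "\<dots> \<le> \<bar>c\<bar> * \<delta>" using b by (intro mult_left_mono) auto
      finally show ?thesis using a by (simp add: algebra_simps)
    qed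
    then have "p (c *\<^sub>R f) - c * p f = 0" by (intro small_zero[of "1 + \<bar>c\<bar>"]) auto
    then show ?thesis by simp
  qed
  have blp: "bounded_linear p"
    by (rule bounded_linear_intro[where K=1]) (use padd pscale pb in auto)
  define \<Phi> where "\<Phi> = Blinfun p"
  have \<Phi>a: "blinfun_apply \<Phi> = p" unfolding \<Phi>_def using blp by (simp add: bounded_linear_Blinfun_apply)
  obtain x where x: "\<And>f. blinfun_apply \<Phi> f = blinfun_apply f x"
    using refl unfolding reflexive_space_def by blast
  have "wcl s x" unfolding wcl_def using freq x \<Phi>a by auto
  then show ?thesis by blast
qed

definition Dset :: "(nat \<Rightarrow> 'a::real_normed_vector) \<Rightarrow> 'a set" where
  "Dset s = {\<Sum>i<n. of_rat (q i) *\<^sub>R s i | n q. True}"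

lemma DsetI: "y = (\<Sum>i<n. of_rat (q i) *\<^sub>R s i) \<Longrightarrow> y \<in> Dset s"
  unfolding Dset_def by blast

lemma sum_extend:
  fixes s :: "nat \<Rightarrow> 'a::real_normed_vector"
  assumes "n \<le> N"
  shows "(\<Sum>i<n. of_rat (q i) *\<^sub>R s i) = (\<Sum>i<N. of_rat (if i < n then q i else 0) *\<^sub>R s i)"
proof -
  have "(\<Sum>i<N. of_rat (if i < n then q i else 0) *\<^sub>R s i) = (\<Sum>i<n. of_rat (if i < n then q i else 0) *\<^sub>R s i)"
    by (rule sum.mono_neutral_right) (use assms in auto)
  also have "\<dots> = (\<Sum>i<n. of_rat (q i) *\<^sub>R s i)" by (rule sum.cong) auto
  finally show ?thesis by simp
qed

lemma Dset_countable: "countable (Dset s)"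
proof -
  have "Dset s \<subseteq> (\<Union>n. (\<lambda>q. \<Sum>i<n. of_rat (q i) *\<^sub>R s i) ` (Pi\<^sub>E {..<n} (\<lambda>_. UNIV)))"
  proof
    fix y assume "y \<in> Dset s"
    then obtain n q where y: "y = (\<Sum>i<n. of_rat (q i) *\<^sub>R s i)" unfolding Dset_def by blast
    have "y = (\<Sum>i<n. of_rat (restrict q {..<n} i) *\<^sub>R s i)" unfolding y by (rule sum.cong) auto
    moreover have "restrict q {..<n} \<in> Pi\<^sub>E {..<n} (\<lambda>_. UNIV)" by auto
    ultimately show "y \<in> (\<Union>n. (\<lambda>q. \<Sum>i<n. of_rat (q i) *\<^sub>R s i) ` (Pi\<^sub>E {..<n} (\<lambda>_. UNIV)))" by blast
  qed
  moreover have "countable (\<Union>n. (\<lambda>q. \<Sum>i<n. of_rat (q i) *\<^sub>R s i) ` (Pi\<^sub>E {..<n} (\<lambda>_. (UNIV::rat set))))"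
    by (intro countable_UN countable_image countable_PiE) auto
  ultimately show ?thesis by (rule countable_subset)
qed

lemma Dset_0: "0 \<in> Dset s"
  unfolding Dset_def by (auto intro!: exI[of _ 0])

lemma Dset_base: "s k \<in> Dset s"
proof -
  have "(\<Sum>i<Suc k. of_rat (if i = k then 1 else 0) *\<^sub>R s i) = (\<Sum>i<Suc k. if i = k then s i else 0)"
    by (rule sum.cong) auto
  also have "\<dots> = s k" by (simp add: sum.delta')
  finally show ?thesis by (intro DsetI[where n="Suc k" and q="\<lambda>i. if i = k then 1 else 0"]) simp
qed

lemma Dset_add: "x \<in> Dset s \<Longrightarrow> y \<in> Dset s \<Longrightarrow> x + y \<in> Dset s"
proof -
  assume "x \<in> Dset s" "y \<in> Dset s"
  then obtain n q m p where x: "x = (\<Sum>i<n. of_rat (q i) *\<^sub>R s i)" and y: "y = (\<Sum>i<m. of_rat (p i) *\<^sub>R s i)"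
    unfolding Dset_def by blast
  have "x = (\<Sum>i<n+m. of_rat (if i < n then q i else 0) *\<^sub>R s i)" unfolding x by (rule sum_extend) simp
  moreover have "y = (\<Sum>i<n+m. of_rat (if i < m then p i else 0) *\<^sub>R s i)" unfolding y by (rule sum_extend) simp
  ultimately have "x + y = (\<Sum>i<n+m. of_rat ((if i < n then q i else 0) + (if i < m then p i else 0)) *\<^sub>R s i)"
    by (simp add: sum.distrib[symmetric] of_rat_add scaleR_add_left)
  then show ?thesis by (rule DsetI)
qed

lemma Dset_scale: "x \<in> Dset s \<Longrightarrow> of_rat r *\<^sub>R x \<in> Dset s"
proof -
  assume "x \<in> Dset s"
  then obtain n q where x: "x = (\<Sum>i<n. of_rat (q i) *\<^sub>R s i)" unfolding Dset_def by blast
  have "of_rat r *\<^sub>R x = (\<Sum>i<n. of_rat (r * q i) *\<^sub>R s i)"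
    unfolding x by (simp add: scaleR_sum_right of_rat_mult)
  then show ?thesis by (rule DsetI)
qed

lemma closure_Dset_subspace: "subspace (closure (Dset s))"
  unfolding subspace_def
proof (intro conjI ballI allI)
  show "0 \<in> closure (Dset s)" using Dset_0 closure_subset by blast
next
  fix x y assume "x \<in> closure (Dset s)" "y \<in> closure (Dset s)"
  then obtain a b where a: "\<forall>n. a n \<in> Dset s" "a \<longlonglongrightarrow> x" and b: "\<forall>n. b n \<in> Dset s" "b \<longlonglongrightarrow> y"
    unfolding closure_sequential by blast
  have "\<forall>n. a n + b n \<in> Dset s" using a b Dset_add by blast
  moreover have "(\<lambda>n. a n + b n) \<longlonglongrightarrow> x + y" using a b by (intro tendsto_add)
  ultimately show "x + y \<in> closure (Dset s)" unfolding closure_sequential by (intro exI[of _ "\<lambda>n. a n + b n"]) simp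
next
  fix c :: real and x assume "x \<in> closure (Dset s)"
  then obtain a where a: "\<forall>n. a n \<in> Dset s" "a \<longlonglongrightarrow> x"
    unfolding closure_sequential by blast
  have "\<exists>r::rat. c < of_rat r \<and> of_rat r < c + inverse (real (Suc k))" for k
  proof -
    have "c < c + inverse (real (Suc k))" by simp
    then obtain t where "t \<in> \<rat>" "c < t" "t < c + inverse (real (Suc k))" using Rats_dense_in_real by blast
    then show ?thesis by (metis Rats_cases)
  qed
  then obtain q :: "nat \<Rightarrow> rat" where q: "\<And>k. c < of_rat (q k) \<and> of_rat (q k) < c + inverse (real (Suc k))" by metis
  have "(\<lambda>k. of_rat (q k) :: real) \<longlonglongrightarrow> c"
  proof (rule real_tendsto_sandwich[where f = "\<lambda>_. c" and h = "\<lambda>k. c + inverse (real (Suc k))"])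
    show "\<forall>\<^sub>F n in sequentially. c \<le> real_of_rat (q n)" using q less_imp_le by (intro always_eventually) blast
    show "\<forall>\<^sub>F n in sequentially. real_of_rat (q n) \<le> c + inverse (real (Suc n))" using q less_imp_le by (intro always_eventually) blast
    show "(\<lambda>_. c) \<longlonglongrightarrow> c" by simp
    have "(\<lambda>n. c + inverse (real (Suc n))) \<longlonglongrightarrow> c + 0"
      by (intro tendsto_intros LIMSEQ_inverse_real_of_nat)
    then show "(\<lambda>n. c + inverse (real (Suc n))) \<longlonglongrightarrow> c" by simp
  qed
  then have "(\<lambda>n. of_rat (q n) *\<^sub>R a n) \<longlonglongrightarrow> c *\<^sub>R x" using a by (intro tendsto_scaleR)
  moreover have "\<forall>n. of_rat (q n) *\<^sub>R a n \<in> Dset s" using a Dset_scale by blast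
  ultimately show "c *\<^sub>R x \<in> closure (Dset s)" unfolding closure_sequential by (intro exI[of _ "\<lambda>n. of_rat (q n) *\<^sub>R a n"]) simp
qed

lemma wcl_in_subspace:
  fixes Z :: "'a::real_normed_vector set"
  assumes "closed Z" "subspace Z" "\<And>n. s n \<in> Z" "wcl s w"
  shows "w \<in> Z"
proof (rule ccontr)
  assume "w \<notin> Z"
  then obtain f :: "'a \<Rightarrow>\<^sub>L real" where f0: "\<forall>v\<in>Z. blinfun_apply f v = 0" and fw: "blinfun_apply f w \<noteq> 0"
    using hb_subspace[OF assms(1,2)] by blast
  have "\<forall>\<delta>>0. \<exists>\<^sub>F n in sequentially. \<forall>g\<in>{f}. \<bar>blinfun_apply g (s n) - blinfun_apply g w\<bar> < \<delta>"
    using assms(4) unfolding wcl_def by blast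
  then have "\<exists>\<^sub>F n in sequentially. \<forall>g\<in>{f}. \<bar>blinfun_apply g (s n) - blinfun_apply g w\<bar> < \<bar>blinfun_apply f w\<bar>"
    using fw by simp
  then obtain n where "\<bar>blinfun_apply f (s n) - blinfun_apply f w\<bar> < \<bar>blinfun_apply f w\<bar>"
    using frequently_ex by fastforce
  then show False using f0 assms(3) by auto
qed

lemma wclD:
  fixes f :: "'a::real_normed_vector \<Rightarrow>\<^sub>L real"
  assumes "wcl s w" "\<delta> > 0"
  shows "\<exists>\<^sub>F n in sequentially. \<bar>blinfun_apply f (s n) - blinfun_apply f w\<bar> < \<delta>"
proof -
  have "finite {f}" by simp
  then have "\<exists>\<^sub>F n in sequentially. \<forall>g\<in>{f}. \<bar>blinfun_apply g (s n) - blinfun_apply g w\<bar> < \<delta>"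
    using assms unfolding wcl_def by blast
  then show ?thesis by simp
qed

lemma wcl_tendsto:
  fixes f :: "'a::real_normed_vector \<Rightarrow>\<^sub>L real"
  assumes "wcl s w" "(\<lambda>n. blinfun_apply f (s n)) \<longlonglongrightarrow> c"
  shows "blinfun_apply f w = c"
proof -
  have "\<bar>blinfun_apply f w - c\<bar> \<le> 2 * \<delta>" if dpos: "\<delta> > 0" for \<delta>
  proof -
    have ev: "\<forall>\<^sub>F n in sequentially. dist (blinfun_apply f (s n)) c < \<delta>"
      using assms(2) dpos by (rule tendstoD)
    have fr: "\<exists>\<^sub>F n in sequentially. \<bar>blinfun_apply f (s n) - blinfun_apply f w\<bar> < \<delta>"
      using assms(1) dpos by (rule wclD)
    obtain n where "dist (blinfun_apply f (s n)) c < \<delta>" "\<bar>blinfun_apply f (s n) - blinfun_apply f w\<bar> < \<delta>"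
      using frequently_ex[OF frequently_eventually_conj[OF fr ev]] by auto
    then show ?thesis by (simp add: dist_real_def)
  qed
  then have "blinfun_apply f w - c = 0" by (intro small_zero[of 2]) auto
  then show ?thesis by simp
qed

lemma weak_subseq:
  fixes s :: "nat \<Rightarrow> 'a::real_normed_vector"
  assumes refl: "reflexive_space TYPE('a)" and bd: "\<And>n. norm (s n) \<le> 1"
  shows "\<exists>r x. strict_mono r \<and> weakly_tendsto (s \<circ> r) x"
proof -
  define D where "D = Dset s"
  define Z where "Z = closure D"
  have clZ: "closed Z" and subZ: "subspace Z" unfolding Z_def D_def
    by (auto simp: closure_Dset_subspace)
  have sZ: "s n \<in> Z" for n unfolding Z_def D_def using Dset_base closure_subset by blast
  have Dne: "D \<noteq> {}" and Dc: "countable D" unfolding D_def using Dset_0 Dset_countable by auto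
  define d where "d = from_nat_into D"
  have rd: "range d = D" unfolding d_def using Dne Dc by simp
  have "\<forall>j. \<exists>f::'a \<Rightarrow>\<^sub>L real. norm f \<le> 1 \<and> blinfun_apply f (d j) = norm (d j)"
    using hb_norming by blast
  then obtain fam :: "nat \<Rightarrow> 'a \<Rightarrow>\<^sub>L real" where fam1: "\<And>j. norm (fam j) \<le> 1"
    and famd: "\<And>j. blinfun_apply (fam j) (d j) = norm (d j)" by metis
  have norming: "z = 0" if zZ: "z \<in> Z" and z0: "\<And>j. blinfun_apply (fam j) z = 0" for z
  proof -
    have "norm z \<le> 2 * \<delta>" if dpos: "\<delta> > 0" for \<delta>
    proof -
      obtain y where "y \<in> D" "dist y z < \<delta>" using zZ dpos unfolding Z_def closure_approachable by blast
      then obtain j where yj: "y = d j" "dist (d j) z < \<delta>" using rd by blast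
      have "norm (d j) = blinfun_apply (fam j) (d j - z)" using famd z0 by (simp add: blinfun.diff_right)
      also have "\<dots> \<le> norm (fam j) * norm (d j - z)" using norm_blinfun[of "fam j" "d j - z"] by simp
      also have "\<dots> \<le> 1 * norm (d j - z)" using fam1 by (intro mult_right_mono) auto
      finally have "norm (d j) \<le> \<delta>" using yj by (simp add: dist_norm)
      moreover have "norm z \<le> norm (d j) + norm (d j - z)" using norm_triangle_ineq4[of "d j" "d j - z"] by simp
      ultimately show ?thesis using yj by (simp add: dist_norm)
    qed
    then have "norm z = 0" by (intro small_zero[of 2]) auto
    then show ?thesis by simp
  qed
  define a where "a n = (\<lambda>j. blinfun_apply (fam j) (s n))" for n
  define C where "C = Pi\<^sub>E UNIV (\<lambda>_::nat. cball (0::real) 1)"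
  have "compactin (product_topology (\<lambda>_. euclidean) UNIV) C"
    unfolding C_def compactin_PiE by auto
  then have cC: "compact C" by (simp add: euclidean_product_topology)
  have aC: "\<forall>n. a n \<in> C"
  proof
    fix n
    have "\<bar>blinfun_apply (fam j) (s n)\<bar> \<le> 1" for j
    proof -
      have "\<bar>blinfun_apply (fam j) (s n)\<bar> \<le> norm (fam j) * norm (s n)" using norm_blinfun[of "fam j" "s n"] by simp
      also have "\<dots> \<le> 1 * 1" using fam1 bd by (intro mult_mono) auto
      finally show ?thesis by simp
    qed
    then show "a n \<in> C" unfolding C_def a_def PiE_UNIV_domain by (auto simp: dist_real_def)
  qed
  obtain l r where r: "strict_mono r" and lim: "(a \<circ> r) \<longlonglongrightarrow> l"
    using seq_compactE[OF compact_imp_seq_compact[OF cC] aC] by metis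
  have limj: "(\<lambda>k. blinfun_apply (fam j) (s (r k))) \<longlonglongrightarrow> l j" for j
  proof -
    have "(\<lambda>k. (a \<circ> r) k j) \<longlonglongrightarrow> l j"
      by (rule continuous_on_tendsto_compose[OF continuous_on_product_coordinates lim]) auto
    then show ?thesis by (simp add: a_def o_def)
  qed
  have bdr: "norm ((s \<circ> r) n) \<le> 1" for n using bd by simp
  obtain x where wx: "wcl (s \<circ> r) x" using wcl_exists[of "s \<circ> r"] refl bdr by blast
  have xZ: "x \<in> Z" by (rule wcl_in_subspace[OF clZ subZ _ wx]) (simp add: sZ)
  have famx: "blinfun_apply (fam j) x = l j" for j
    by (rule wcl_tendsto[OF wx]) (use limj in \<open>simp add: o_def\<close>)
  have "weakly_tendsto (s \<circ> r) x"
    unfolding weakly_tendsto_def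
  proof
    fix f :: "'a \<Rightarrow>\<^sub>L real"
    show "(\<lambda>n. blinfun_apply f ((s \<circ> r) n)) \<longlonglongrightarrow> blinfun_apply f x"
    proof (rule ccontr)
      assume "\<not> ?thesis"
      then obtain \<delta> where dpos: "\<delta> > 0" and
        nev: "\<not> (\<forall>\<^sub>F n in sequentially. dist (blinfun_apply f ((s \<circ> r) n)) (blinfun_apply f x) < \<delta>)"
        unfolding tendsto_iff by blast
      then have "\<exists>\<^sub>F n in sequentially. \<not> dist (blinfun_apply f ((s \<circ> r) n)) (blinfun_apply f x) < \<delta>"
        by (simp add: not_eventually)
      then have "infinite {n. \<not> dist (blinfun_apply f ((s \<circ> r) n)) (blinfun_apply f x) < \<delta>}"
        by (simp add: frequently_cofinite[symmetric] cofinite_eq_sequentially)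
      then obtain r' :: "nat \<Rightarrow> nat" where r': "strict_mono r'"
        and far: "\<And>k. \<not> dist (blinfun_apply f ((s \<circ> r) (r' k))) (blinfun_apply f x) < \<delta>"
        using infinite_enumerate by blast
      have bdr': "norm ((s \<circ> r \<circ> r') n) \<le> 1" for n using bd by simp
      obtain w where ww: "wcl (s \<circ> r \<circ> r') w" using wcl_exists[of "s \<circ> r \<circ> r'"] refl bdr' by blast
      have wZ: "w \<in> Z" by (rule wcl_in_subspace[OF clZ subZ _ ww]) (simp add: sZ)
      have famw: "blinfun_apply (fam j) w = l j" for j
      proof (rule wcl_tendsto[OF ww])
        have "((\<lambda>k. blinfun_apply (fam j) (s (r k))) \<circ> r') \<longlonglongrightarrow> l j"
          by (rule LIMSEQ_subseq_LIMSEQ[OF limj r'])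
        then show "(\<lambda>n. blinfun_apply (fam j) ((s \<circ> r \<circ> r') n)) \<longlonglongrightarrow> l j" by (simp add: o_def)
      qed
      have "w - x = 0"
      proof (rule norming)
        show "w - x \<in> Z" using subZ wZ xZ by (simp add: subspace_diff)
        show "blinfun_apply (fam j) (w - x) = 0" for j using famw famx by (simp add: blinfun.diff_right)
      qed
      then have wx_eq: "w = x" by simp
      have "\<exists>\<^sub>F n in sequentially. \<bar>blinfun_apply f ((s \<circ> r \<circ> r') n) - blinfun_apply f w\<bar> < \<delta>"
        using ww dpos by (rule wclD)
      then obtain n where "\<bar>blinfun_apply f ((s \<circ> r \<circ> r') n) - blinfun_apply f w\<bar> < \<delta>"
        using frequently_ex by fastforce
      then show False using far[of n] wx_eq by (simp add: dist_real_def)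
    qed
  qed
  then show ?thesis using r by blast
qed

lemma compact_op_weak:
  fixes T :: "'a::real_normed_vector \<Rightarrow>\<^sub>L 'b::real_normed_vector"
  assumes cT: "compact_operator T" and bd: "\<And>n. norm (s n) \<le> 1"
    and wt: "weakly_tendsto s x"
  shows "(\<lambda>n. blinfun_apply T (s n)) \<longlonglongrightarrow> blinfun_apply T x"
proof (rule ccontr)
  assume "\<not> ?thesis"
  then obtain \<delta> where dpos: "\<delta> > 0" and
    nev: "\<not> (\<forall>\<^sub>F n in sequentially. dist (blinfun_apply T (s n)) (blinfun_apply T x) < \<delta>)"
    unfolding tendsto_iff by blast
  then have "\<exists>\<^sub>F n in sequentially. \<not> dist (blinfun_apply T (s n)) (blinfun_apply T x) < \<delta>"
    by (simp add: not_eventually)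
  then have "infinite {n. \<not> dist (blinfun_apply T (s n)) (blinfun_apply T x) < \<delta>}"
    by (simp add: frequently_cofinite[symmetric] cofinite_eq_sequentially)
  then obtain r' :: "nat \<Rightarrow> nat" where r': "strict_mono r'"
    and far: "\<And>k. \<not> dist (blinfun_apply T (s (r' k))) (blinfun_apply T x) < \<delta>"
    using infinite_enumerate by blast
  define K where "K = closure (blinfun_apply T ` cball 0 1)"
  have cK: "compact K" using cT unfolding compact_operator_def K_def .
  have inK: "\<forall>k. (\<lambda>k. blinfun_apply T (s (r' k))) k \<in> K"
    using bd closure_subset unfolding K_def by fastforce
  obtain y r'' where r'': "strict_mono (r'' :: nat \<Rightarrow> nat)"
    and lim: "((\<lambda>k. blinfun_apply T (s (r' k))) \<circ> r'') \<longlonglongrightarrow> y"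
    using seq_compactE[OF compact_imp_seq_compact[OF cK] inK] by metis
  have "\<forall>g::'b \<Rightarrow>\<^sub>L real. blinfun_apply g (y - blinfun_apply T x) = 0"
  proof
    fix g :: "'b \<Rightarrow>\<^sub>L real"
    have l1: "(\<lambda>k. blinfun_apply g (((\<lambda>k. blinfun_apply T (s (r' k))) \<circ> r'') k)) \<longlonglongrightarrow> blinfun_apply g y"
      by (rule bounded_linear.tendsto[OF blinfun.bounded_linear_right lim])
    have "(\<lambda>n. blinfun_apply (g o\<^sub>L T) (s n)) \<longlonglongrightarrow> blinfun_apply (g o\<^sub>L T) x"
      using wt unfolding weakly_tendsto_def by blast
    then have "((\<lambda>n. blinfun_apply (g o\<^sub>L T) (s n)) \<circ> (r' \<circ> r'')) \<longlonglongrightarrow> blinfun_apply (g o\<^sub>L T) x"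
      by (rule LIMSEQ_subseq_LIMSEQ) (use r' r'' in \<open>simp add: strict_mono_o\<close>)
    then have l2: "(\<lambda>k. blinfun_apply g (((\<lambda>k. blinfun_apply T (s (r' k))) \<circ> r'') k)) \<longlonglongrightarrow> blinfun_apply g (blinfun_apply T x)"
      by (simp add: o_def)
    have "blinfun_apply g y = blinfun_apply g (blinfun_apply T x)"
      using LIMSEQ_unique[OF l1 l2] .
    then show "blinfun_apply g (y - blinfun_apply T x) = 0" by (simp add: blinfun.diff_right)
  qed
  then have "y = blinfun_apply T x" using hb_separates[of "y - blinfun_apply T x"] by auto
  then have "eventually (\<lambda>k. dist (((\<lambda>k. blinfun_apply T (s (r' k))) \<circ> r'') k) (blinfun_apply T x) < \<delta>) sequentially"
    using lim dpos \<open>y = blinfun_apply T x\<close> by (metis tendstoD)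
  then obtain k where "dist (blinfun_apply T (s (r' (r'' k)))) (blinfun_apply T x) < \<delta>"
    using eventually_sequentially by (auto simp: o_def)
  then show False using far by blast
qed

theorem theorem2p12:
  assumes "reflexive_space TYPE('a::banach)"
    and "kadets_klee TYPE('a)"
    and "dim_gt_one TYPE('a)"
    and "dim_gt_one TYPE('b::banach)"
  shows "sBPBp_compact TYPE('a) TYPE('b)"
  unfolding sBPBp_compact_def
proof (intro allI impI)
  fix \<epsilon> :: real and T :: "'a \<Rightarrow>\<^sub>L 'b"
  assume epos: "\<epsilon> > 0" and TT: "compact_operator T \<and> norm T = 1"
  then have cT: "compact_operator T" and nT: "norm T = 1" by auto
  show "\<exists>\<eta>>0. \<forall>x0. norm x0 = 1 \<and> norm (blinfun_apply T x0) > 1 - \<eta> \<longrightarrow>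
           (\<exists>x1. norm x1 = 1 \<and> norm (blinfun_apply T x1) = 1 \<and> norm (x1 - x0) < \<epsilon>)"
  proof (rule ccontr)
    assume H: "\<not> ?thesis"
    have "\<exists>x0. norm x0 = 1 \<and> norm (blinfun_apply T x0) > 1 - inverse (real (Suc n)) \<and>
            (\<forall>x1. norm x1 = 1 \<and> norm (blinfun_apply T x1) = 1 \<longrightarrow> \<not> norm (x1 - x0) < \<epsilon>)" for n
    proof -
      have "inverse (real (Suc n)) > 0" by simp
      then show ?thesis using H by blast
    qed
    then obtain s where s1: "\<And>n. norm (s n) = 1"
      and sT: "\<And>n. norm (blinfun_apply T (s n)) > 1 - inverse (real (Suc n))"
      and sfar: "\<And>n x1. norm x1 = 1 \<Longrightarrow> norm (blinfun_apply T x1) = 1 \<Longrightarrow> \<not> norm (x1 - s n) < \<epsilon>"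
      by metis
    have Tle: "norm (blinfun_apply T v) \<le> norm v" for v using norm_blinfun[of T v] nT by simp
    have sbd: "norm (s n) \<le> 1" for n using s1 by simp
    obtain r x where r: "strict_mono r" and wt: "weakly_tendsto (s \<circ> r) x"
      using weak_subseq[of s] assms(1) sbd by blast
    have Tlim: "(\<lambda>n. blinfun_apply T ((s \<circ> r) n)) \<longlonglongrightarrow> blinfun_apply T x"
      by (rule compact_op_weak[OF cT _ wt]) (simp add: sbd)
    have n1: "(\<lambda>n. norm (blinfun_apply T (s n))) \<longlonglongrightarrow> 1"
    proof (rule real_tendsto_sandwich[where f = "\<lambda>n. 1 - inverse (real (Suc n))" and h = "\<lambda>_. 1"])
      show "\<forall>\<^sub>F n in sequentially. 1 - inverse (real (Suc n)) \<le> norm (blinfun_apply T (s n))"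
        using sT less_imp_le by (intro always_eventually) blast
      show "\<forall>\<^sub>F n in sequentially. norm (blinfun_apply T (s n)) \<le> 1"
        using Tle s1 by (intro always_eventually) (metis)
      have "(\<lambda>n. 1 - inverse (real (Suc n))) \<longlonglongrightarrow> 1 - 0"
        by (intro tendsto_intros LIMSEQ_inverse_real_of_nat)
      then show "(\<lambda>n. 1 - inverse (real (Suc n))) \<longlonglongrightarrow> 1" by simp
    qed simp
    have "((\<lambda>n. norm (blinfun_apply T (s n))) \<circ> r) \<longlonglongrightarrow> 1" by (rule LIMSEQ_subseq_LIMSEQ[OF n1 r])
    moreover have "((\<lambda>n. norm (blinfun_apply T (s n))) \<circ> r) \<longlonglongrightarrow> norm (blinfun_apply T x)"
      using tendsto_norm[OF Tlim] by (simp add: o_def)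
    ultimately have nTx: "norm (blinfun_apply T x) = 1" using LIMSEQ_unique by metis
    obtain f :: "'a \<Rightarrow>\<^sub>L real" where f1: "norm f \<le> 1" and fx: "blinfun_apply f x = norm x"
      using hb_norming by blast
    have "(\<lambda>n. blinfun_apply f ((s \<circ> r) n)) \<longlonglongrightarrow> norm x" using wt fx unfolding weakly_tendsto_def by metis
    moreover have "blinfun_apply f ((s \<circ> r) n) \<le> 1" for n
    proof -
      have "blinfun_apply f ((s \<circ> r) n) \<le> norm f * norm ((s \<circ> r) n)"
        using norm_blinfun[of f "(s \<circ> r) n"] by simp
      also have "\<dots> \<le> 1" using f1 s1 by simp
      finally show ?thesis .
    qed
    ultimately have "norm x \<le> 1" by (intro LIMSEQ_le_const2) auto
    moreover have "1 \<le> norm x" using Tle[of x] nTx by simp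
    ultimately have nx: "norm x = 1" by simp
    have "(\<lambda>n. norm ((s \<circ> r) n - x)) \<longlonglongrightarrow> 0"
      using assms(2) wt nx s1 unfolding kadets_klee_def by (simp add: o_def)
    then have "eventually (\<lambda>n. norm ((s \<circ> r) n - x) < \<epsilon>) sequentially"
      using epos by (auto dest: order_tendstoD(2))
    then obtain n where "norm (s (r n) - x) < \<epsilon>" using eventually_sequentially by auto
    then have "norm (x - s (r n)) < \<epsilon>" by (simp add: norm_minus_commute)
    then show False using sfar[OF nx nTx] by blast
  qed
qed

end
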